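(* Let $M$ be a minimal dominating set of a finite tree $T$. Then $$|N_1(M)|-\rho_1(M)+|N_2(M)|-\rho_2(M)\le 2(\Gamma(T)-|M|).$$
   Context: A dominating set of a graph $G=(V,E)$ is a set $S\subseteq V$ such that every vertex is in $S$ or adjacent to a vertex of $S$; it is minimal if no proper subset is dominating. $\Gamma(T)$ is the maximum size of a minimal dominating set of $T$. $N[u]=N(u)\cup\{u\}$. For a dominating set $S$: $a(S)=\{u\in S: S\setminus\{u\}\text{ is not dominating}\}$; $N_1(S)=\{u\in V\setminus S: |N[u]\cap S|=1\}$; $N_2(S)=\{u\in V\setminus S: |N[u]\cap S|\ge 2\}$; $a_1(S)=\{u\in a(S): N[u]\cap N_1(S)\ne\emptyset\}$; $a_2(S)=\{u\in a(S): N[u]\cap N_1(S)=\emptyset\}$. $\rho_1(M)$ is the maximum size of a matching, using edges of $T$, between $N_1(M)$ and $a_1(M)$ (each edge joining a vertex of $N_1(M)$ to a vertex of $a_1(M)$); $\rho_2(M)$ is the maximum size of such a matching between $N_2(M)$ and $a_2(M)$. *)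

theory Defs
  imports Main
begin

definition simple_graph :: "'a set \<Rightarrow> 'a set set \<Rightarrow> bool" where
  "simple_graph V E \<longleftrightarrow> (\<forall>e\<in>E. e \<subseteq> V \<and> card e = 2)"

definition adj :: "'a set set \<Rightarrow> 'a \<Rightarrow> 'a \<Rightarrow> bool" where
  "adj E u v \<longleftrightarrow> {u, v} \<in> E"

fun walk :: "'a set \<Rightarrow> 'a set set \<Rightarrow> 'a list \<Rightarrow> bool" where
  "walk V E [] = False"
| "walk V E [v] = (v \<in> V)"
| "walk V E (u # v # vs) = (u \<in> V \<and> adj E u v \<and> walk V E (v # vs))"

definition connected_graph :: "'a set \<Rightarrow> 'a set set \<Rightarrow> bool" where
  "connected_graph V E \<longleftrightarrow>
     (\<forall>u\<in>V. \<forall>v\<in>V. \<exists>p. walk V E p \<and> hd p = u \<and> last p = v)"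

definition is_cycle :: "'a set \<Rightarrow> 'a set set \<Rightarrow> 'a list \<Rightarrow> bool" where
  "is_cycle V E c \<longleftrightarrow> length c \<ge> 3 \<and> distinct c \<and> walk V E c \<and> adj E (last c) (hd c)"

definition acyclic_graph :: "'a set \<Rightarrow> 'a set set \<Rightarrow> bool" where
  "acyclic_graph V E \<longleftrightarrow> (\<nexists>c. is_cycle V E c)"

definition finite_tree :: "'a set \<Rightarrow> 'a set set \<Rightarrow> bool" where
  "finite_tree V E \<longleftrightarrow> finite V \<and> V \<noteq> {} \<and> simple_graph V E
     \<and> connected_graph V E \<and> acyclic_graph V E"

definition cnbhd :: "'a set \<Rightarrow> 'a set set \<Rightarrow> 'a \<Rightarrow> 'a set" where
  "cnbhd V E u = insert u {v\<in>V. adj E u v}"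

definition dominating :: "'a set \<Rightarrow> 'a set set \<Rightarrow> 'a set \<Rightarrow> bool" where
  "dominating V E S \<longleftrightarrow> S \<subseteq> V \<and> (\<forall>v\<in>V. v \<in> S \<or> (\<exists>u\<in>S. adj E u v))"

definition minimal_dominating :: "'a set \<Rightarrow> 'a set set \<Rightarrow> 'a set \<Rightarrow> bool" where
  "minimal_dominating V E S \<longleftrightarrow> dominating V E S \<and> (\<forall>S'. S' \<subset> S \<longrightarrow> \<not> dominating V E S')"

definition upper_domination :: "'a set \<Rightarrow> 'a set set \<Rightarrow> nat" where
  "upper_domination V E = Max (card ` {S. minimal_dominating V E S})"

definition aS :: "'a set \<Rightarrow> 'a set set \<Rightarrow> 'a set \<Rightarrow> 'a set" where
  "aS V E S = {u\<in>S. \<not> dominating V E (S - {u})}"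

definition N1 :: "'a set \<Rightarrow> 'a set set \<Rightarrow> 'a set \<Rightarrow> 'a set" where
  "N1 V E S = {u\<in>V - S. card (cnbhd V E u \<inter> S) = 1}"

definition N2 :: "'a set \<Rightarrow> 'a set set \<Rightarrow> 'a set \<Rightarrow> 'a set" where
  "N2 V E S = {u\<in>V - S. card (cnbhd V E u \<inter> S) \<ge> 2}"

definition a1 :: "'a set \<Rightarrow> 'a set set \<Rightarrow> 'a set \<Rightarrow> 'a set" where
  "a1 V E S = {u\<in>aS V E S. cnbhd V E u \<inter> N1 V E S \<noteq> {}}"

definition a2 :: "'a set \<Rightarrow> 'a set set \<Rightarrow> 'a set \<Rightarrow> 'a set" where
  "a2 V E S = {u\<in>aS V E S. cnbhd V E u \<inter> N1 V E S = {}}"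

definition matching_between :: "'a set set \<Rightarrow> 'a set \<Rightarrow> 'a set \<Rightarrow> 'a set set \<Rightarrow> bool" where
  "matching_between E A B F \<longleftrightarrow> F \<subseteq> E
     \<and> (\<forall>e\<in>F. \<exists>x\<in>A. \<exists>y\<in>B. e = {x, y})
     \<and> (\<forall>e\<in>F. \<forall>e'\<in>F. e \<noteq> e' \<longrightarrow> e \<inter> e' = {})"

definition max_matching :: "'a set set \<Rightarrow> 'a set \<Rightarrow> 'a set \<Rightarrow> nat" where
  "max_matching E A B = Max (card ` {F. matching_between E A B F})"

definition rho1 :: "'a set \<Rightarrow> 'a set set \<Rightarrow> 'a set \<Rightarrow> nat" where
  "rho1 V E M = max_matching E (N1 V E M) (a1 V E M)"

definition rho2 :: "'a set \<Rightarrow> 'a set set \<Rightarrow> 'a set \<Rightarrow> nat" where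
  "rho2 V E M = max_matching E (N2 V E M) (a2 V E M)"

end

theory Submission
  imports Defs
begin

lemma adj_sym: "adj E u v = adj E v u"
  unfolding adj_def by (simp add: insert_commute)

lemma adj_irrefl: "simple_graph V E \<Longrightarrow> \<not> adj E u u"
  unfolding adj_def simple_graph_def by fastforce

lemma adj_V: "simple_graph V E \<Longrightarrow> adj E u v \<Longrightarrow> u \<in> V \<and> v \<in> V"
  unfolding adj_def simple_graph_def by blast

lemma finite_E: "simple_graph V E \<Longrightarrow> finite V \<Longrightarrow> finite E"
proof -
  assume "simple_graph V E" "finite V"
  then have "E \<subseteq> Pow V" unfolding simple_graph_def by blast
  then show ?thesis using \<open>finite V\<close> finite_subset by blast
qed

lemma walk_of:
  "p \<noteq> [] \<Longrightarrow> set p \<subseteq> V \<Longrightarrow> (\<forall>i. Suc i < length p \<longrightarrow> adj E (p!i) (p!Suc i)) \<Longrightarrow> walk V E p"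
proof (induction V E p rule: walk.induct)
  case (1 V E)
  then show ?case by simp
next
  case (2 V E v)
  then show ?case by simp
next
  case (3 V E u v vs)
  have a: "adj E u v" using "3.prems"(3) by (metis length_Cons nth_Cons_0 nth_Cons_Suc zero_less_Suc Suc_less_eq)
  have "walk V E (v # vs)"
  proof (rule "3.IH")
    show "\<forall>i. Suc i < length (v # vs) \<longrightarrow> adj E ((v # vs) ! i) ((v # vs) ! Suc i)"
    proof (intro allI impI)
      fix i assume "Suc i < length (v # vs)"
      then have "Suc (Suc i) < length (u # v # vs)" by simp
      then have "adj E ((u # v # vs) ! Suc i) ((u # v # vs) ! Suc (Suc i))" using "3.prems"(3) by blast
      then show "adj E ((v # vs) ! i) ((v # vs) ! Suc i)" by simp
    qed
  qed (use "3.prems" in auto)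
  then show ?case using a "3.prems" by simp
qed

definition ipath :: "'a set \<Rightarrow> 'a set set \<Rightarrow> 'a list \<Rightarrow> bool" where
  "ipath W E p \<longleftrightarrow> distinct p \<and> set p \<subseteq> W \<and> (\<forall>i. Suc i < length p \<longrightarrow> adj E (p!i) (p!Suc i))"

lemma leaf:
  assumes sg: "simple_graph V E" and ac: "acyclic_graph V E"
    and fW: "finite W" and WV: "W \<subseteq> V" and ne: "W \<noteq> {}"
  shows "\<exists>l\<in>W. \<forall>a\<in>W. \<forall>b\<in>W. adj E l a \<longrightarrow> adj E l b \<longrightarrow> a = b"
proof (rule ccontr)
  assume "\<not> ?thesis"
  then have H: "\<forall>l\<in>W. \<exists>a\<in>W. \<exists>b\<in>W. adj E l a \<and> adj E l b \<and> a \<noteq> b" by blast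
  have ex: "\<exists>p. ipath W E p \<and> length p = Suc k" for k
  proof (induction k)
    case 0
    obtain w where "w \<in> W" using ne by blast
    then show ?case by (intro exI[of _ "[w]"]) (simp add: ipath_def)
  next
    case (Suc k)
    then obtain p where p: "ipath W E p" "length p = Suc k" by blast
    define v where "v = p ! 0"
    have vW: "v \<in> W" using p unfolding ipath_def v_def by (metis nth_mem subsetD zero_less_Suc)
    obtain a b where ab: "a \<in> W" "b \<in> W" "adj E v a" "adj E v b" "a \<noteq> b" using H vW by blast
    obtain w where w: "w \<in> W" "adj E v w" "Suc 1 \<le> length p \<longrightarrow> w \<noteq> p ! 1"
      using ab by metis
    show ?case
    proof (cases "w \<in> set p")
      case False
      have "ipath W E (w # p)"
        unfolding ipath_def
      proof (intro conjI allI impI)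
        show "distinct (w # p)" using False p(1) by (simp add: ipath_def)
        show "set (w # p) \<subseteq> W" using w p(1) by (simp add: ipath_def)
        fix i assume i: "Suc i < length (w # p)"
        show "adj E ((w # p) ! i) ((w # p) ! Suc i)"
        proof (cases i)
          case 0
          then show ?thesis using w(2) adj_sym[of E v w] v_def by simp
        next
          case (Suc j)
          then show ?thesis using i p(1) by (simp add: ipath_def)
        qed
      qed
      then show ?thesis using p(2) by (intro exI[of _ "w # p"]) simp
    next
      case True
      then obtain i where i: "i < length p" "p ! i = w" by (meson in_set_conv_nth)
      have "i \<noteq> 0" using i w(2) adj_irrefl[OF sg] v_def by metis
      moreover have "i \<noteq> 1" using i w(3) by auto
      ultimately have i2: "i \<ge> 2" by linarith
      define c where "c = take (Suc i) p"
      have lc: "length c = Suc i" using i c_def by simp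
      have "is_cycle V E c"
        unfolding is_cycle_def
      proof (intro conjI)
        show "3 \<le> length c" using lc i2 by simp
        show "distinct c" using p(1) c_def by (simp add: ipath_def)
        show "walk V E c"
        proof (rule walk_of)
          show "c \<noteq> []" using lc by auto
          show "set c \<subseteq> V" using p(1) WV c_def set_take_subset unfolding ipath_def by fast
          show "\<forall>j. Suc j < length c \<longrightarrow> adj E (c ! j) (c ! Suc j)"
            using p(1) lc i unfolding ipath_def c_def by simp
        qed
        have "last c = c ! i" using lc by (metis diff_Suc_1 last_conv_nth list.size(3) nat.distinct(1))
        also have "\<dots> = w" using i unfolding c_def by simp
        finally have "last c = w" .
        moreover have "hd c = v" using lc i unfolding c_def v_def by (cases p) auto
        ultimately show "adj E (last c) (hd c)" using w(2) adj_sym by metis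
      qed
      then show ?thesis using ac unfolding acyclic_graph_def by blast
    qed
  qed
  obtain p where p: "ipath W E p" "length p = Suc (card W)" using ex by blast
  have "length p = card (set p)" using p(1) distinct_card unfolding ipath_def by metis
  also have "\<dots> \<le> card W" using p(1) fW card_mono unfolding ipath_def by metis
  finally show False using p(2) by simp
qed

definition indep :: "'a set set \<Rightarrow> 'a set \<Rightarrow> bool" where
  "indep E I \<longleftrightarrow> (\<forall>x\<in>I. \<forall>y\<in>I. \<not> adj E x y)"

definition goodF :: "'a set set \<Rightarrow> 'a set \<Rightarrow> 'a set \<Rightarrow> 'a set set \<Rightarrow> bool" where
  "goodF E W A F \<longleftrightarrow> F \<subseteq> E \<and> (\<forall>e\<in>F. \<exists>x\<in>W. \<exists>y\<in>A. e = {x, y})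
     \<and> (\<forall>e\<in>F. \<forall>e'\<in>F. e \<noteq> e' \<longrightarrow> e \<inter> e' = {}) \<and> finite F"

lemma goodF_mono: "goodF E W' A' F \<Longrightarrow> W' \<subseteq> W \<Longrightarrow> A' \<subseteq> A \<Longrightarrow> goodF E W A F"
  unfolding goodF_def by (meson subsetD)

lemma goodF_sub: "goodF E W A F \<Longrightarrow> A \<subseteq> W \<Longrightarrow> e \<in> F \<Longrightarrow> e \<subseteq> W"
  unfolding goodF_def by fastforce

lemma goodF_ins:
  assumes g: "goodF E W A F" and e: "{l, p} \<in> E" and lW: "l \<in> W" and pW: "p \<in> W"
    and lpA: "l \<in> A \<or> p \<in> A"
    and dis: "\<And>e. e \<in> F \<Longrightarrow> l \<notin> e \<and> p \<notin> e"
  shows "goodF E W A (insert {l, p} F)"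
  unfolding goodF_def
proof (intro conjI ballI impI)
  show "insert {l, p} F \<subseteq> E" using g e unfolding goodF_def by blast
  show "finite (insert {l, p} F)" using g unfolding goodF_def by blast
  fix x assume x: "x \<in> insert {l, p} F"
  show "\<exists>a\<in>W. \<exists>b\<in>A. x = {a, b}"
  proof (cases "x = {l, p}")
    case True
    show ?thesis
    proof (cases "p \<in> A")
      case True
      then show ?thesis using \<open>x = {l, p}\<close> lW by blast
    next
      case False
      then have "l \<in> A" using lpA by blast
      then show ?thesis using \<open>x = {l, p}\<close> pW by (metis insert_commute)
    qed
  next
    case False
    then show ?thesis using x g unfolding goodF_def by (meson insertE)
  qed
next
  fix x y assume x: "x \<in> insert {l, p} F" and y: "y \<in> insert {l, p} F" and xy: "x \<noteq> y"
  show "x \<inter> y = {}"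
  proof (cases "x = {l, p}")
    case True
    then have "y \<in> F" using y xy by blast
    then show ?thesis using dis True by blast
  next
    case False
    then have xF: "x \<in> F" using x by blast
    show ?thesis
    proof (cases "y = {l, p}")
      case True
      then show ?thesis using dis xF by blast
    next
      case False
      then have "y \<in> F" using y by blast
      then show ?thesis using xF xy g unfolding goodF_def by meson
    qed
  qed
qed


lemma indep_match:
  assumes sg: "simple_graph V E" and ac: "acyclic_graph V E"
  shows "finite W \<Longrightarrow> W \<subseteq> V \<Longrightarrow> A \<subseteq> W \<Longrightarrow> indep E A \<Longrightarrow>
    \<exists>I F. I \<subseteq> W \<and> indep E I \<and> goodF E W A F \<and> card W + card A \<le> 2 * card I + card F"
proof (induction W arbitrary: A rule: finite_psubset_induct)
  case (psubset W)
  show ?case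
  proof (cases "W = {}")
    case True
    then have "A = {}" using psubset.prems by blast
    then show ?thesis using True
      by (intro exI[of _ "{}"]) (simp add: indep_def goodF_def)
  next
    case False
    obtain l where l: "l \<in> W" "\<forall>a\<in>W. \<forall>b\<in>W. adj E l a \<longrightarrow> adj E l b \<longrightarrow> a = b"
      using leaf[OF sg ac psubset.hyps(1) psubset.prems(1) False] by blast
    show ?thesis
    proof (cases "\<exists>p\<in>W. adj E l p")
      case False
      define W' where "W' = W - {l}"
      define A' where "A' = A - {l}"
      have WW: "W' \<subset> W" using l W'_def by blast
      have s: "W' \<subseteq> V" "A' \<subseteq> W'" "indep E A'"
        using psubset.prems unfolding W'_def A'_def indep_def by auto
      obtain I F where IF: "I \<subseteq> W'" "indep E I" "goodF E W' A' F"
        "card W' + card A' \<le> 2 * card I + card F"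
        using psubset.IH[OF WW s(1) s(2) s(3)] by blast
      have "indep E (insert l I)"
      proof -
        have "\<not> adj E l y" if "y \<in> I" for y using that IF(1) False W'_def by blast
        then show ?thesis using IF(2) adj_irrefl[OF sg] unfolding indep_def by (metis adj_sym insert_iff)
      qed
      moreover have "insert l I \<subseteq> W" using IF(1) l W'_def by blast
      moreover have "goodF E W A F" using goodF_mono[OF IF(3)] unfolding W'_def A'_def by blast
      moreover have "card W = Suc (card W')" using l psubset.hyps(1) unfolding W'_def
        by (metis card_Suc_Diff1)
      moreover have "card A \<le> Suc (card A')"
      proof -
        have fA: "finite A" using psubset.prems(2) psubset.hyps(1) finite_subset by blast
        show ?thesis using fA unfolding A'_def by (cases "l \<in> A") (auto simp: card_Diff_singleton)
      qed
      moreover have "card (insert l I) = Suc (card I)"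
      proof -
        have "finite I" using IF(1) W'_def finite_subset psubset.hyps(1) by blast
        moreover have "l \<notin> I" using IF(1) W'_def by blast
        ultimately show ?thesis by simp
      qed
      ultimately show ?thesis using IF(4) by (intro exI[of _ "insert l I"] exI[of _ F]) auto
    next
      case True
      then obtain p where p: "p \<in> W" "adj E l p" by blast
      have lp: "l \<noteq> p" using p adj_irrefl[OF sg] by metis
      define W' where "W' = W - {l, p}"
      define A' where "A' = A - {l, p}"
      have WW: "W' \<subset> W" using l W'_def by blast
      have s: "W' \<subseteq> V" "A' \<subseteq> W'" "indep E A'"
        using psubset.prems unfolding W'_def A'_def indep_def by auto
      obtain I F where IF: "I \<subseteq> W'" "indep E I" "goodF E W' A' F"
        "card W' + card A' \<le> 2 * card I + card F"
        using psubset.IH[OF WW s(1) s(2) s(3)] by blast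
      have lI: "l \<notin> I" using IF(1) W'_def by blast
      have iI: "indep E (insert l I)"
      proof -
        have "\<not> adj E l y" if "y \<in> I" for y
        proof
          assume "adj E l y"
          then have "y = p" using l(2) p that IF(1) W'_def by blast
          then show False using that IF(1) W'_def by blast
        qed
        then show ?thesis using IF(2) adj_irrefl[OF sg] unfolding indep_def by (metis adj_sym insert_iff)
      qed
      have sI: "insert l I \<subseteq> W" using IF(1) l W'_def by blast
      have cW: "card W = card W' + 2"
      proof -
        have "card W' = card W - card {l, p}" unfolding W'_def
          using l p by (intro card_Diff_subset) (auto intro: finite_subset[OF _ psubset.hyps(1)])
        moreover have "card {l, p} = 2" using lp by simp
        moreover have "card {l, p} \<le> card W" using l p psubset.hyps(1) by (intro card_mono) auto
        ultimately show ?thesis by simp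
      qed
      have cI: "card (insert l I) = Suc (card I)"
      proof -
        have "finite I" using IF(1) W'_def finite_subset psubset.hyps(1) by blast
        then show ?thesis using lI by simp
      qed
      have fA: "finite A" using psubset.prems(2) psubset.hyps(1) finite_subset by blast
      have goodF': "goodF E W A F" using goodF_mono[OF IF(3)] unfolding W'_def A'_def by blast
      show ?thesis
      proof (cases "l \<in> A \<or> p \<in> A")
        case False
        then have "A' = A" unfolding A'_def by blast
        then show ?thesis using iI sI goodF' cW cI IF(4)
          by (intro exI[of _ "insert l I"] exI[of _ F]) auto
      next
        case True
        have notboth: "\<not> (l \<in> A \<and> p \<in> A)" using psubset.prems(3) p(2) unfolding indep_def by blast
        have cA: "card A = Suc (card A')"
        proof (cases "l \<in> A")
          case True
          then have "A = insert l A'" "l \<notin> A'" using notboth unfolding A'_def by auto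
          then show ?thesis using fA by (metis card_insert_disjoint finite_insert)
        next
          case False
          then have "p \<in> A" using \<open>l \<in> A \<or> p \<in> A\<close> by blast
          then have "A = insert p A'" "p \<notin> A'" using False unfolding A'_def by auto
          then show ?thesis using fA by (metis card_insert_disjoint finite_insert)
        qed
        have eF: "e \<subseteq> W'" if "e \<in> F" for e using goodF_sub[OF IF(3) s(2) that] .
        have nF: "{l, p} \<notin> F" using eF W'_def by blast
        have "goodF E W A (insert {l, p} F)"
        proof (rule goodF_ins[OF goodF'])
          show "{l, p} \<in> E" using p(2) unfolding adj_def .
          show "\<And>e. e \<in> F \<Longrightarrow> l \<notin> e \<and> p \<notin> e" using eF W'_def by blast
        qed (use l(1) p(1) True in auto)
        moreover have "card (insert {l, p} F) = Suc (card F)"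
          using nF IF(3) unfolding goodF_def by simp
        ultimately show ?thesis using iI sI cW cI cA IF(4)
          by (intro exI[of _ "insert l I"] exI[of _ "insert {l, p} F"]) auto
      qed
    qed
  qed
qed

lemma max_indep:
  assumes sg: "simple_graph V E" and fV: "finite V" and IV: "I \<subseteq> V" and iI: "indep E I"
  shows "\<exists>J. I \<subseteq> J \<and> J \<subseteq> V \<and> indep E J \<and> (\<forall>v\<in>V. v \<notin> J \<longrightarrow> (\<exists>u\<in>J. adj E u v))"
proof -
  define S where "S = {J. I \<subseteq> J \<and> J \<subseteq> V \<and> indep E J}"
  have "S \<subseteq> Pow V" unfolding S_def by blast
  then have fS: "finite S" using fV finite_subset by blast
  have IS: "I \<in> S" unfolding S_def using IV iI by blast
  have "Max (card ` S) \<in> card ` S" using fS IS by (intro Max_in) auto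
  then obtain J where J: "J \<in> S" "card J = Max (card ` S)" by auto
  have mx: "card J' \<le> card J" if "J' \<in> S" for J' using J(2) fS that by simp
  have "\<forall>v\<in>V. v \<notin> J \<longrightarrow> (\<exists>u\<in>J. adj E u v)"
  proof (intro ballI impI, rule ccontr)
    fix v assume v: "v \<in> V" "v \<notin> J" and nu: "\<not> (\<exists>u\<in>J. adj E u v)"
    have iJ: "indep E J" using J(1) unfolding S_def by blast
    have "indep E (insert v J)"
      unfolding indep_def
    proof (intro ballI)
      fix x y assume x: "x \<in> insert v J" and y: "y \<in> insert v J"
      show "\<not> adj E x y"
      proof (cases "x = v")
        case True
        then show ?thesis
        proof (cases "y = v")
          case True
          then show ?thesis using \<open>x = v\<close> adj_irrefl[OF sg] by simp
        next
          case False
          then have "y \<in> J" using y by blast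
          then show ?thesis using nu \<open>x = v\<close> adj_sym[of E v y] by blast
        qed
      next
        case False
        then have xJ: "x \<in> J" using x by blast
        show ?thesis
        proof (cases "y = v")
          case True
          then show ?thesis using nu xJ by blast
        next
          case False
          then show ?thesis using y xJ iJ unfolding indep_def by blast
        qed
      qed
    qed
    then have "insert v J \<in> S" using J(1) v unfolding S_def by blast
    then have "card (insert v J) \<le> card J" using mx by blast
    moreover have "finite J" using J(1) fV unfolding S_def using finite_subset by blast
    ultimately show False using v by simp
  qed
  then show ?thesis using J(1) unfolding S_def by blast
qed

lemma indep_mindom:
  assumes "J \<subseteq> V" "indep E J" "\<forall>v\<in>V. v \<notin> J \<longrightarrow> (\<exists>u\<in>J. adj E u v)"
  shows "minimal_dominating V E J"
  unfolding minimal_dominating_def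
proof (intro conjI allI impI)
  show "dominating V E J" using assms unfolding dominating_def by blast
  fix S' assume "S' \<subset> J"
  then obtain u where u: "u \<in> J" "u \<notin> S'" by blast
  show "\<not> dominating V E S'"
  proof
    assume "dominating V E S'"
    then obtain w where "w \<in> S'" "adj E w u" using u assms(1) unfolding dominating_def by blast
    then show False using u \<open>S' \<subset> J\<close> assms(2) unfolding indep_def by blast
  qed
qed

lemma max_matching_ge:
  assumes "finite E" "matching_between E A B F"
  shows "card F \<le> max_matching E A B"
proof -
  have "{F. matching_between E A B F} \<subseteq> Pow E" unfolding matching_between_def by blast
  then have "finite {F. matching_between E A B F}" using assms(1) finite_subset by blast
  then show ?thesis unfolding max_matching_def using assms(2) by (intro Max_ge) auto
qed

lemma arith_aux:
  fixes v a2 i f a1 r1 r2 g m n1 n2 :: int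
  shows "v + a2 \<le> 2 * i + f \<Longrightarrow> a1 \<le> r1 \<Longrightarrow> f \<le> r2 \<Longrightarrow> i \<le> g \<Longrightarrow> v = m + n1 + n2 \<Longrightarrow> m = a1 + a2 \<Longrightarrow>
  n1 - r1 + n2 - r2 \<le> 2 * (g - m)" by smt

theorem theorem4p8:
  fixes V :: "'a set" and E :: "'a set set" and M :: "'a set"
  assumes "finite_tree V E"
    and "minimal_dominating V E M"
  shows "int (card (N1 V E M)) - int (rho1 V E M) + int (card (N2 V E M)) - int (rho2 V E M)
           \<le> 2 * (int (upper_domination V E) - int (card M))"
proof -
  have fV: "finite V" and sg: "simple_graph V E" and ac: "acyclic_graph V E"
    using assms(1) unfolding finite_tree_def by auto
  have fE: "finite E" using finite_E[OF sg fV] .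
  have domM: "dominating V E M" using assms(2) unfolding minimal_dominating_def by blast
  have MV: "M \<subseteq> V" using domM unfolding dominating_def by blast
  have fM: "finite M" using MV fV finite_subset by blast
  have ndom: "\<not> dominating V E (M - {u})" if "u \<in> M" for u
    using assms(2) that unfolding minimal_dominating_def by blast
  have aSM: "aS V E M = M" unfolding aS_def using ndom by blast
  define n1 where "n1 = N1 V E M"
  define n2 where "n2 = N2 V E M"
  define A1 where "A1 = a1 V E M"
  define A2 where "A2 = a2 V E M"
  have fin_c: "finite (cnbhd V E v \<inter> M)" for v using fM by blast
  have n1V: "n1 \<subseteq> V - M" "n2 \<subseteq> V - M" unfolding n1_def n2_def N1_def N2_def by auto
  have n12: "n1 \<inter> n2 = {}" unfolding n1_def n2_def N1_def N2_def by auto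
  have VM: "V - M = n1 \<union> n2"
  proof
    show "n1 \<union> n2 \<subseteq> V - M" using n1V by blast
    show "V - M \<subseteq> n1 \<union> n2"
    proof
      fix v assume v: "v \<in> V - M"
      then obtain u where u: "u \<in> M" "adj E u v" using domM unfolding dominating_def by blast
      have "u \<in> cnbhd V E v \<inter> M" using u MV adj_sym[of E u v] unfolding cnbhd_def by blast
      then have "card (cnbhd V E v \<inter> M) \<noteq> 0" using fin_c[of v] by auto
      then have "card (cnbhd V E v \<inter> M) = 1 \<or> card (cnbhd V E v \<inter> M) \<ge> 2" by linarith
      then show "v \<in> n1 \<union> n2" using v unfolding n1_def n2_def N1_def N2_def by blast
    qed
  qed
  have A12: "A1 \<union> A2 = M" "A1 \<inter> A2 = {}"
    unfolding A1_def A2_def a1_def a2_def using aSM by auto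
  have A2noM: "\<not> adj E x y" if y: "y \<in> A2" and x: "x \<in> M" for x y
  proof
    assume xy: "adj E x y"
    have yM: "y \<in> M" and yN: "cnbhd V E y \<inter> n1 = {}"
      using y aSM unfolding A2_def a2_def n1_def by auto
    have "\<not> dominating V E (M - {y})" using ndom yM .
    moreover have "M - {y} \<subseteq> V" using MV by blast
    ultimately obtain v where v: "v \<in> V" "v \<notin> M - {y}" "\<not> (\<exists>u\<in>M - {y}. adj E u v)"
      unfolding dominating_def by blast
    show False
    proof (cases "v = y")
      case True
      have "x \<noteq> y" using xy adj_irrefl[OF sg] by metis
      then show False using v(3) True x xy by blast
    next
      case False
      then have vM: "v \<notin> M" using v(2) by blast
      obtain u where u: "u \<in> M" "adj E u v" using domM v(1) vM unfolding dominating_def by blast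
      have uy: "u = y" using u v(3) by blast
      have "cnbhd V E v \<inter> M = {y}"
      proof
        show "{y} \<subseteq> cnbhd V E v \<inter> M" using yM MV u uy adj_sym[of E y v] unfolding cnbhd_def by blast
        show "cnbhd V E v \<inter> M \<subseteq> {y}"
        proof
          fix w assume w: "w \<in> cnbhd V E v \<inter> M"
          then have "w = v \<or> adj E v w" unfolding cnbhd_def by blast
          then have "adj E v w" using w vM by blast
          then have "adj E w v" using adj_sym by metis
          then show "w \<in> {y}" using w v(3) by blast
        qed
      qed
      then have "v \<in> n1" using v(1) vM unfolding n1_def N1_def by simp
      moreover have "v \<in> cnbhd V E y" using v(1) u uy unfolding cnbhd_def by blast
      ultimately show False using yN by blast
    qed
  qed
  have A2nb: "x \<in> n2" if y: "y \<in> A2" and xy: "adj E x y" for x y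
  proof -
    have xV: "x \<in> V" using adj_V[OF sg xy] by blast
    have "x \<notin> M" using A2noM y xy by blast
    moreover have "x \<notin> n1"
    proof
      assume "x \<in> n1"
      moreover have "x \<in> cnbhd V E y" using xV xy adj_sym[of E x y] unfolding cnbhd_def by blast
      ultimately show False using y unfolding A2_def a2_def n1_def by blast
    qed
    ultimately show ?thesis using VM xV by blast
  qed
  have A2V: "A2 \<subseteq> V" using A12 MV by blast
  have iA2: "indep E A2" unfolding indep_def using A2noM A12 by blast
  obtain I F where IF: "I \<subseteq> V" "indep E I" "goodF E V A2 F" "card V + card A2 \<le> 2 * card I + card F"
    using indep_match[OF sg ac fV _ A2V iA2] by blast
  have "matching_between E n2 A2 F"
    unfolding matching_between_def
  proof (intro conjI)
    show "F \<subseteq> E" using IF(3) unfolding goodF_def by blast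
    show "\<forall>e\<in>F. \<forall>e'\<in>F. e \<noteq> e' \<longrightarrow> e \<inter> e' = {}" using IF(3) unfolding goodF_def by meson
    show "\<forall>e\<in>F. \<exists>x\<in>n2. \<exists>y\<in>A2. e = {x, y}"
    proof
      fix e assume e: "e \<in> F"
      then obtain x y where xy: "x \<in> V" "y \<in> A2" "e = {x, y}" using IF(3) unfolding goodF_def by meson
      have "e \<in> E" using e IF(3) unfolding goodF_def by blast
      then have "adj E x y" using xy(3) unfolding adj_def by simp
      then have "x \<in> n2" using A2nb xy(2) by blast
      then show "\<exists>x\<in>n2. \<exists>y\<in>A2. e = {x, y}" using xy by blast
    qed
  qed
  then have r2: "card F \<le> rho2 V E M" unfolding rho2_def n2_def A2_def
    using max_matching_ge[OF fE] by blast
  have exp: "\<exists>p. p \<in> n1 \<and> adj E u p" if u: "u \<in> A1" for u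
  proof -
    obtain p where p: "p \<in> cnbhd V E u" "p \<in> n1" using u unfolding A1_def a1_def n1_def by blast
    have "u \<in> M" using u A12 by blast
    then have "p \<noteq> u" using p(2) n1V by blast
    then have "adj E u p" using p(1) unfolding cnbhd_def by blast
    then show ?thesis using p(2) by blast
  qed
  define pp where "pp u = (SOME p. p \<in> n1 \<and> adj E u p)" for u
  have pp: "pp u \<in> n1" "adj E u (pp u)" if "u \<in> A1" for u
    using someI_ex[OF exp[OF that]] unfolding pp_def by auto
  have ppM: "pp u \<notin> M" if "u \<in> A1" for u using pp(1)[OF that] n1V by blast
  have A1M: "A1 \<subseteq> M" using A12 by blast
  define F1 where "F1 = (\<lambda>u. {pp u, u}) ` A1"
  have inj: "inj_on (\<lambda>u. {pp u, u}) A1"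
  proof (rule inj_onI)
    fix u u' assume u: "u \<in> A1" and u': "u' \<in> A1" and eq: "{pp u, u} = {pp u', u'}"
    have "u \<in> {pp u', u'}" using eq by blast
    moreover have "u \<noteq> pp u'" using ppM[OF u'] u A1M by blast
    ultimately show "u = u'" by blast
  qed
  have "matching_between E n1 A1 F1"
    unfolding matching_between_def
  proof (intro conjI)
    show "F1 \<subseteq> E"
    proof
      fix e assume "e \<in> F1"
      then obtain u where u: "u \<in> A1" "e = {pp u, u}" unfolding F1_def by blast
      have "{u, pp u} \<in> E" using pp(2)[OF u(1)] unfolding adj_def .
      then show "e \<in> E" using u(2) by (simp add: insert_commute)
    qed
    show "\<forall>e\<in>F1. \<exists>x\<in>n1. \<exists>y\<in>A1. e = {x, y}" unfolding F1_def using pp(1) by blast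
    show "\<forall>e\<in>F1. \<forall>e'\<in>F1. e \<noteq> e' \<longrightarrow> e \<inter> e' = {}"
    proof (intro ballI impI)
      fix e e' assume e: "e \<in> F1" and e': "e' \<in> F1" and ne: "e \<noteq> e'"
      obtain u where u: "u \<in> A1" "e = {pp u, u}" using e unfolding F1_def by blast
      obtain u' where u': "u' \<in> A1" "e' = {pp u', u'}" using e' unfolding F1_def by blast
      have uu: "u \<noteq> u'"
      proof
        assume "u = u'"
        then have "e = e'" using u(2) u'(2) by simp
        then show False using ne by contradiction
      qed
      have "pp u \<noteq> pp u'"
      proof
        assume eqp: "pp u = pp u'"
        define p where "p = pp u"
        have pn1: "p \<in> n1" using pp(1)[OF u(1)] p_def by simp
        have "adj E p u" using pp(2)[OF u(1)] p_def adj_sym by metis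
        moreover have "adj E p u'" using pp(2)[OF u'(1)] eqp p_def adj_sym by metis
        moreover have "u \<in> M" "u' \<in> M" "u \<in> V" "u' \<in> V" using u(1) u'(1) A1M MV by auto
        ultimately have "{u, u'} \<subseteq> cnbhd V E p \<inter> M"
          unfolding cnbhd_def by blast
        then have "card {u, u'} \<le> card (cnbhd V E p \<inter> M)" using fin_c by (intro card_mono) auto
        moreover have "card {u, u'} = 2" using uu by simp
        moreover have "card (cnbhd V E p \<inter> M) = 1" using pn1 unfolding n1_def N1_def by blast
        ultimately show False by simp
      qed
      moreover have "u \<noteq> pp u'" using ppM[OF u'(1)] u(1) A1M by blast
      moreover have "u' \<noteq> pp u" using ppM[OF u(1)] u'(1) A1M by blast
      ultimately show "e \<inter> e' = {}" using u(2) u'(2) uu by auto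
    qed
  qed
  then have "card F1 \<le> rho1 V E M" unfolding rho1_def n1_def A1_def
    using max_matching_ge[OF fE] by blast
  moreover have "card F1 = card A1" unfolding F1_def using inj by (rule card_image)
  ultimately have r1: "card A1 \<le> rho1 V E M" by simp
  obtain J where J: "I \<subseteq> J" "J \<subseteq> V" "indep E J" "\<forall>v\<in>V. v \<notin> J \<longrightarrow> (\<exists>u\<in>J. adj E u v)"
    using max_indep[OF sg fV IF(1,2)] by blast
  have mJ: "minimal_dominating V E J" using indep_mindom[OF J(2,3,4)] .
  have "{S. minimal_dominating V E S} \<subseteq> Pow V"
    unfolding minimal_dominating_def dominating_def by blast
  then have "finite {S. minimal_dominating V E S}" using fV finite_subset by blast
  then have "card J \<le> upper_domination V E" unfolding upper_domination_def using mJ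
    by (intro Max_ge) auto
  moreover have "card I \<le> card J" using J(1,2) fV finite_subset card_mono by metis
  ultimately have IG: "card I \<le> upper_domination V E" by simp
  have fn: "finite n1" "finite n2" using n1V fV finite_subset by blast+
  have "card V = card M + card (V - M)" using MV fV
    by (metis card_Diff_subset card_mono diff_add_inverse2 le_add_diff_inverse add.commute fM)
  moreover have "card (V - M) = card n1 + card n2" using VM n12 fn by (simp add: card_Un_disjoint)
  ultimately have cV: "card V = card M + card n1 + card n2" by simp
  have fA: "finite A1" "finite A2" using A12 fM finite_subset by blast+
  have cM: "card M = card A1 + card A2" using A12 fA card_Un_disjoint by metis
  have h1: "int (card V) + int (card A2) \<le> 2 * int (card I) + int (card F)" using IF(4) by linarith
  have h2: "int (card A1) \<le> int (rho1 V E M)" "int (card F) \<le> int (rho2 V E M)"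
    "int (card I) \<le> int (upper_domination V E)" using r1 r2 IG by simp_all
  have h3: "int (card V) = int (card M) + int (card n1) + int (card n2)"
    "int (card M) = int (card A1) + int (card A2)" using cV cM by simp_all
  show ?thesis
  proof -
    have "int (card n1) - int (rho1 V E M) + int (card n2) - int (rho2 V E M)
           \<le> 2 * (int (upper_domination V E) - int (card M))"
      by (rule arith_aux[OF h1 h2 h3])
    then show ?thesis unfolding n1_def n2_def .
  qed
qed

end
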